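(* Let $\pi$ be a positive continuous probability density on $\mathbb{R}$ and $q:\mathbb{R}^2\to[0,\infty)$ a bounded continuous function with $q(x,\cdot)$ a probability density for each $x$ and, for some $s>0$, $q(x,x+u)=0$ whenever $|u|>s$. Then for every $a>0$, $\|T_{a^c}\|_2\le\beta_a$, where $\beta_a:=\int_{-s}^{s}\sup_{|x|>a}\sqrt{t(x,x+u)\,t(x+u,x)}\,du$.
   Context: $L^2(\pi)$ is the $L^2$ space of the probability measure $\pi(y)dy$, with operator norm $\|\cdot\|_2$. Set $t(x,y):=\min(q(x,y),\pi(y)q(y,x)/\pi(x))$, $(Tf)(x):=\int_{\mathbb{R}}f(y)t(x,y)\,dy$, and $T_{a^c}f:=1_{\mathbb{R}\setminus[-a,a]}\cdot Tf$. *)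

theory Defs
  imports "HOL-Analysis.Analysis"
begin

definition tker :: "(real \<Rightarrow> real) \<Rightarrow> (real \<Rightarrow> real \<Rightarrow> real) \<Rightarrow> real \<Rightarrow> real \<Rightarrow> real" where
  "tker p q x y = min (q x y) (p y * q y x / p x)"

definition Top :: "(real \<Rightarrow> real) \<Rightarrow> (real \<Rightarrow> real \<Rightarrow> real) \<Rightarrow> (real \<Rightarrow> real) \<Rightarrow> real \<Rightarrow> real" where
  "Top p q f x = (LINT y|lborel. f y * tker p q x y)"

definition Tac :: "(real \<Rightarrow> real) \<Rightarrow> (real \<Rightarrow> real \<Rightarrow> real) \<Rightarrow> real \<Rightarrow> (real \<Rightarrow> real) \<Rightarrow> real \<Rightarrow> real" where
  "Tac p q a f x = indicator (UNIV - {-a..a}) x * Top p q f x"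

definition L2norm :: "(real \<Rightarrow> real) \<Rightarrow> (real \<Rightarrow> real) \<Rightarrow> ereal" where
  "L2norm p f = (if integrable lborel (\<lambda>y. (f y)\<^sup>2 * p y)
                 then ereal (sqrt (LINT y|lborel. (f y)\<^sup>2 * p y)) else \<infinity>)"

definition opnorm2 :: "(real \<Rightarrow> real) \<Rightarrow> ((real \<Rightarrow> real) \<Rightarrow> (real \<Rightarrow> real)) \<Rightarrow> ereal" where
  "opnorm2 p A = (SUP f \<in> {f. L2norm p f \<le> 1}. L2norm p (A f))"

end

theory Submission
  imports Defs
begin

locale setting =
  fixes p :: "real \<Rightarrow> real" and q :: "real \<Rightarrow> real \<Rightarrow> real" and s a :: real
  assumes p_pos: "\<And>x. p x > 0"
    and p_cont: "continuous_on UNIV p"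
    and q_nonneg: "\<And>x y. q x y \<ge> 0"
    and q_bdd: "\<exists>B. \<forall>x y. q x y \<le> B"
    and q_cont: "continuous_on UNIV (\<lambda>(x, y). q x y)"
    and s_pos: "s > 0"
    and q_supp: "\<And>x u. \<bar>u\<bar> > s \<Longrightarrow> q x (x + u) = 0"
    and a_pos: "a > 0"
begin

abbreviation "t \<equiv> tker p q"

lemma t_nonneg: "0 \<le> t x y"
  using p_pos[of x] p_pos[of y] q_nonneg[of x y] q_nonneg[of y x]
  by (simp add: tker_def)

lemma t_le_q: "t x y \<le> q x y"
  by (simp add: tker_def)

lemma t_rev: "p x * t x y = p y * t y x"
proof -
  have "p x * t x y = min (p x * q x y) (p y * q y x)"
    using p_pos[of x] by (simp add: tker_def min_mult_distrib_left)
  moreover have "p y * t y x = min (p y * q y x) (p x * q x y)"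
    using p_pos[of y] by (simp add: tker_def min_mult_distrib_left)
  ultimately show ?thesis by (simp add: min.commute)
qed

lemma t_supp: "\<bar>u\<bar> > s \<Longrightarrow> t x (x + u) = 0"
  using t_nonneg[of x "x+u"] t_le_q[of x "x+u"] q_supp[of u x] by simp

lemma t_cont: "continuous_on UNIV (\<lambda>z. t (fst z) (snd z))"
proof -
  have q1: "continuous_on UNIV (\<lambda>z. q (fst z) (snd z))"
    using q_cont by (simp add: case_prod_beta')
  have q2: "continuous_on UNIV (\<lambda>z. q (snd z) (fst z))"
    using continuous_on_compose2[OF q1, of UNIV "\<lambda>z. (snd z, fst z)"]
    by (simp add: continuous_on_snd continuous_on_fst continuous_on_Pair continuous_on_id)
  have p1: "continuous_on UNIV (\<lambda>z::real\<times>real. p (fst z))"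
    using continuous_on_compose2[OF p_cont, of UNIV fst] by (simp add: continuous_on_snd continuous_on_fst continuous_on_id)
  have p2: "continuous_on UNIV (\<lambda>z::real\<times>real. p (snd z))"
    using continuous_on_compose2[OF p_cont, of UNIV snd] by (simp add: continuous_on_snd continuous_on_fst continuous_on_id)
  show ?thesis unfolding tker_def
    using p_pos by (intro continuous_intros q1 q2 p1 p2) (auto simp: less_imp_neq[symmetric])
qed

lemma t_cont_comp:
  assumes "continuous_on UNIV f" "continuous_on UNIV g"
  shows "continuous_on UNIV (\<lambda>u::'b::topological_space. t (f u) (g u))"
  using continuous_on_compose2[OF t_cont, of UNIV "\<lambda>u. (f u, g u)"] assms
  by (simp add: continuous_on_Pair)

lemma p_meas[measurable]: "p \<in> borel_measurable borel"
  using p_cont by (simp add: borel_measurable_continuous_onI)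

lemma t_meas[measurable (raw)]:
  assumes [measurable]: "f \<in> M \<rightarrow>\<^sub>M borel" "g \<in> M \<rightarrow>\<^sub>M borel"
  shows "(\<lambda>z. t (f z) (g z)) \<in> borel_measurable M"
proof -
  have "(\<lambda>z. t (fst z) (snd z)) \<in> borel_measurable borel"
    using t_cont by (simp add: borel_measurable_continuous_onI)
  then have m: "(\<lambda>z. t (fst z) (snd z)) \<in> borel_measurable (borel \<Otimes>\<^sub>M borel)"
    by (simp add: borel_prod)
  have "(\<lambda>z. (f z, g z)) \<in> M \<rightarrow>\<^sub>M borel \<Otimes>\<^sub>M borel" by measurable
  from measurable_compose[OF this m] show ?thesis by simp
qed

definition "Bq = (SOME B. \<forall>x y. q x y \<le> B)"

lemma q_le_Bq: "q x y \<le> Bq"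
proof -
  have "\<forall>x y. q x y \<le> Bq" unfolding Bq_def using q_bdd by (rule someI_ex)
  then show ?thesis by blast
qed

lemma Bq_nonneg: "0 \<le> Bq"
  using q_le_Bq[of 0 0] q_nonneg[of 0 0] by linarith

lemma t_le_Bq: "t x y \<le> Bq"
  using t_le_q q_le_Bq order_trans by blast

abbreviation "Aset \<equiv> {x::real. \<bar>x\<bar> > a}"

abbreviation "gg x u \<equiv> sqrt (t x (x + u) * t (x + u) x)"

abbreviation "S u \<equiv> (SUP x\<in>Aset. gg x u)"

lemma Aset_open: "open Aset"
  by (auto intro!: open_Collect_less continuous_intros)

lemma Aset_meas[measurable]: "Aset \<in> sets borel"
  using Aset_open by simp

lemma Aset_ne: "Aset \<noteq> {}"
proof -
  have "a + 1 \<in> Aset" using a_pos by auto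
  then show ?thesis by blast
qed

lemma gg_le: "gg x u \<le> Bq"
proof -
  have "t x (x + u) * t (x + u) x \<le> Bq * Bq"
    by (intro mult_mono t_le_Bq t_nonneg Bq_nonneg)
  then have "gg x u \<le> sqrt (Bq * Bq)" by (rule real_sqrt_le_mono)
  then show ?thesis using Bq_nonneg by simp
qed

lemma gg_nonneg: "0 \<le> gg x u"
  using t_nonneg by simp

lemma S_bdd: "bdd_above ((\<lambda>x. gg x u) ` Aset)"
  using gg_le by (auto intro!: bdd_aboveI)

lemma S_ge: "x \<in> Aset \<Longrightarrow> gg x u \<le> S u"
  by (rule cSUP_upper[OF _ S_bdd])

lemma S_nonneg: "0 \<le> S u"
proof -
  have "a + 1 \<in> Aset" using a_pos by auto
  from S_ge[OF this, of u] gg_nonneg[of "a+1" u] show ?thesis by linarith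
qed

lemma S_le: "S u \<le> Bq"
  using Aset_ne gg_le by (intro cSUP_least) auto

lemma gg_cont: "continuous_on UNIV (\<lambda>u. gg x u)"
proof -
  have c1: "continuous_on UNIV (\<lambda>u. t x (x + u))"
    by (rule t_cont_comp) (auto intro: continuous_intros)
  have c2: "continuous_on UNIV (\<lambda>u. t (x + u) x)"
    by (rule t_cont_comp) (auto intro: continuous_intros)
  show ?thesis by (intro continuous_on_real_sqrt continuous_on_mult c1 c2)
qed

lemma S_meas[measurable]: "(\<lambda>u. S u) \<in> borel_measurable borel"
  unfolding borel_measurable_iff_greater
proof
  fix c
  have eq: "{w. c < S w} = (\<Union>x\<in>Aset. {w. c < gg x w})"
    using less_cSUP_iff[OF Aset_ne S_bdd] by auto
  have "open {w. c < S w}"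
    unfolding eq by (intro open_UN ballI open_Collect_less continuous_on_const gg_cont)
  then show "{w \<in> space borel. c < S w} \<in> sets borel" by simp
qed

lemma h_zero: assumes "x \<in> Aset" "S u = 0" shows "t x (x + u) = 0"
proof -
  have "gg x u \<le> 0" using S_ge[OF assms(1), of u] assms(2) by simp
  moreover have "0 \<le> t x (x + u) * t (x + u) x" using t_nonneg by simp
  ultimately have "t x (x + u) * t (x + u) x = 0" by simp
  then consider "t x (x + u) = 0" | "t (x + u) x = 0" by auto
  then show ?thesis
  proof cases
    case 2
    then have "p x * t x (x + u) = 0" using t_rev[of x "x+u"] by simp
    then show ?thesis using p_pos[of x] by simp
  qed
qed

lemma prod_le: assumes "x \<in> Aset" shows "t x (x + u) * t (x + u) x \<le> (S u)\<^sup>2"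
proof -
  have nn: "0 \<le> t x (x + u) * t (x + u) x" using t_nonneg by simp
  have "(gg x u)\<^sup>2 \<le> (S u)\<^sup>2"
    by (rule power_mono[OF S_ge[OF assms] gg_nonneg])
  then show ?thesis using nn by simp
qed

lemma key2: assumes "x \<in> Aset" "S u > 0"
  shows "p x * (t x (x + u))\<^sup>2 / S u \<le> p (x + u) * S u"
proof -
  have "p x * (t x (x + u))\<^sup>2 = t x (x + u) * (p x * t x (x + u))"
    by (simp add: power2_eq_square)
  also have "\<dots> = p (x + u) * (t x (x + u) * t (x + u) x)"
    using t_rev[of x "x+u"] by simp
  also have "\<dots> \<le> p (x + u) * (S u)\<^sup>2"
    using prod_le[OF assms(1)] p_pos[of "x+u"] by (intro mult_left_mono) auto
  finally have "p x * (t x (x + u))\<^sup>2 \<le> p (x + u) * S u * S u"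
    by (simp add: power2_eq_square mult.assoc)
  then show ?thesis using assms(2) by (simp add: divide_le_eq)
qed

lemma shift_nn:
  fixes f :: "real \<Rightarrow> ennreal"
  assumes [measurable]: "f \<in> borel_measurable borel"
  shows "(\<integral>\<^sup>+y. f y \<partial>lborel) = (\<integral>\<^sup>+u. f (x + u) \<partial>lborel)"
  using nn_integral_real_affine[of f 1 x] by simp

lemma step2:
  assumes g[measurable]: "g \<in> borel_measurable borel" and g0: "\<And>y. 0 \<le> g y"
    and x: "x \<in> Aset"
  shows "(\<integral>\<^sup>+u. ennreal (g (x + u) * t x (x + u)) \<partial>lborel)\<^sup>2 \<le>
     (\<integral>\<^sup>+u. ennreal (S u * indicator {-s..s} u) \<partial>lborel) *
     (\<integral>\<^sup>+u. ennreal (g (x + u)^2 * t x (x + u)^2 / S u * indicator {-s..s} u) \<partial>lborel)"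
proof -
  define F where "F u = sqrt (S u * indicator {-s..s} u)" for u
  define G where "G u = g (x + u) * t x (x + u) / sqrt (S u) * indicator {-s..s} u" for u
  have [measurable]: "F \<in> borel_measurable borel" "G \<in> borel_measurable borel"
    unfolding F_def G_def by measurable
  have F0: "0 \<le> F u" for u unfolding F_def using S_nonneg by simp
  have G0: "0 \<le> G u" for u unfolding G_def using S_nonneg g0 t_nonneg by simp
  have eq1: "g (x + u) * t x (x + u) = F u * G u" for u
  proof (cases "\<bar>u\<bar> > s")
    case True
    then show ?thesis using t_supp[OF True, of x] by (simp add: F_def G_def)
  next
    case False
    then have ind: "indicator {-s..s} u = (1::real)" by (auto simp: indicator_def abs_le_iff)
    show ?thesis
    proof (cases "S u = 0")
      case True
      then show ?thesis using h_zero[OF x True] by (simp add: F_def G_def)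
    next
      case False
      then have "sqrt (S u) > 0" using S_nonneg[of u] by simp
      then show ?thesis by (simp add: F_def G_def ind)
    qed
  qed
  have eq2: "F u ^ 2 = S u * indicator {-s..s} u" for u
    unfolding F_def using S_nonneg[of u] by simp
  have eq3: "G u ^ 2 = g (x + u)^2 * t x (x + u)^2 / S u * indicator {-s..s} u" for u
    unfolding G_def using S_nonneg[of u]
    by (simp add: power_mult_distrib power_divide indicator_def)
  have "(\<integral>\<^sup>+u. ennreal (g (x + u) * t x (x + u)) \<partial>lborel) =
        (\<integral>\<^sup>+u. ennreal (F u) * ennreal (G u) \<partial>lborel)"
    using F0 G0 by (simp add: eq1 ennreal_mult)
  also have "\<dots>\<^sup>2 \<le> (\<integral>\<^sup>+u. ennreal (F u) ^ 2 \<partial>lborel) * (\<integral>\<^sup>+u. ennreal (G u) ^ 2 \<partial>lborel)"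
    by (rule Cauchy_Schwarz_nn_integral) measurable
  also have "\<dots> = (\<integral>\<^sup>+u. ennreal (S u * indicator {-s..s} u) \<partial>lborel) *
     (\<integral>\<^sup>+u. ennreal (g (x + u)^2 * t x (x + u)^2 / S u * indicator {-s..s} u) \<partial>lborel)"
    using F0 G0 by (simp add: ennreal_power eq2 eq3)
  finally show ?thesis .
qed

lemma main_ineq:
  assumes g[measurable]: "g \<in> borel_measurable borel" and g0: "\<And>y. 0 \<le> g y"
    and gint: "(\<integral>\<^sup>+y. ennreal (g y ^ 2 * p y) \<partial>lborel) \<le> 1"
  shows "(\<integral>\<^sup>+x. ennreal (indicator Aset x * p x) * (\<integral>\<^sup>+y. ennreal (g y * t x y) \<partial>lborel)\<^sup>2 \<partial>lborel)
     \<le> (\<integral>\<^sup>+u. ennreal (S u * indicator {-s..s} u) \<partial>lborel)\<^sup>2"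
proof -
  define \<beta> where "\<beta> = (\<integral>\<^sup>+u. ennreal (S u * indicator {-s..s} u) \<partial>lborel)"
  define W where "W x u = g (x + u)^2 * t x (x + u)^2 / S u * indicator {-s..s} u" for x u
  define V where "V x u = indicator Aset x * p x * W x u" for x u
  have W0: "0 \<le> W x u" for x u unfolding W_def using S_nonneg by simp
  have [measurable]: "case_prod V \<in> borel_measurable (lborel \<Otimes>\<^sub>M lborel)"
    unfolding V_def W_def by measurable
  have pw: "ennreal (indicator Aset x * p x) * (\<integral>\<^sup>+y. ennreal (g y * t x y) \<partial>lborel)\<^sup>2
      \<le> \<beta> * (\<integral>\<^sup>+u. ennreal (V x u) \<partial>lborel)" for x
  proof (cases "x \<in> Aset")
    case False
    then show ?thesis by simp
  next
    case True
    have "(\<integral>\<^sup>+y. ennreal (g y * t x y) \<partial>lborel) = (\<integral>\<^sup>+u. ennreal (g (x + u) * t x (x + u)) \<partial>lborel)"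
      by (rule shift_nn) measurable
    then have "ennreal (indicator Aset x * p x) * (\<integral>\<^sup>+y. ennreal (g y * t x y) \<partial>lborel)\<^sup>2
       \<le> ennreal (indicator Aset x * p x) * (\<beta> * (\<integral>\<^sup>+u. ennreal (W x u) \<partial>lborel))"
      using step2[OF g g0 True] unfolding \<beta>_def W_def by (intro mult_left_mono) auto
    also have "\<dots> = \<beta> * (\<integral>\<^sup>+u. ennreal (indicator Aset x * p x) * ennreal (W x u) \<partial>lborel)"
    proof -
      have Wm: "(\<lambda>u. ennreal (W x u)) \<in> borel_measurable lborel"
        unfolding W_def by measurable
      show ?thesis
        using nn_integral_cmult[OF Wm, of "ennreal (indicator Aset x * p x)"] by (simp add: ac_simps)
    qed
    also have "\<dots> = \<beta> * (\<integral>\<^sup>+u. ennreal (V x u) \<partial>lborel)"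
      using p_pos[of x] W0 by (simp add: V_def ennreal_mult)
    finally show ?thesis .
  qed
  have inner: "(\<integral>\<^sup>+x. ennreal (V x u) \<partial>lborel) \<le> ennreal (S u * indicator {-s..s} u)" for u
  proof -
    have "(\<integral>\<^sup>+x. ennreal (V x u) \<partial>lborel) \<le>
          (\<integral>\<^sup>+x. ennreal (S u * indicator {-s..s} u) * ennreal (g (x + u)^2 * p (x + u)) \<partial>lborel)"
    proof (intro nn_integral_mono)
      fix x
      have "V x u \<le> S u * indicator {-s..s} u * (g (x + u)^2 * p (x + u))"
      proof (cases "x \<in> Aset \<and> \<bar>u\<bar> \<le> s \<and> S u \<noteq> 0")
        case False
        then consider "x \<notin> Aset" | "\<not> \<bar>u\<bar> \<le> s" | "S u = 0" by blast
        then have "V x u = 0"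
          by cases (auto simp: V_def W_def indicator_def abs_le_iff)
        then show ?thesis using S_nonneg[of u] p_pos[of "x+u"] by simp
      next
        case True
        then have x: "x \<in> Aset" and Sp: "S u > 0" and ind: "indicator {-s..s} u = (1::real)"
          using S_nonneg[of u] by (auto simp: indicator_def abs_le_iff)
        have "V x u = g (x + u)^2 * (p x * t x (x + u)^2 / S u)"
          using x by (simp add: V_def W_def ind)
        also have "\<dots> \<le> g (x + u)^2 * (p (x + u) * S u)"
          by (intro mult_left_mono key2 x Sp) simp
        finally show ?thesis by (simp add: ind ac_simps)
      qed
      then show "ennreal (V x u) \<le> ennreal (S u * indicator {-s..s} u) * ennreal (g (x + u)^2 * p (x + u))"
        using S_nonneg[of u] p_pos[of "x+u"] by (simp add: ennreal_mult[symmetric] ennreal_leI)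
    qed
    also have "\<dots> = ennreal (S u * indicator {-s..s} u) * (\<integral>\<^sup>+x. ennreal (g (x + u)^2 * p (x + u)) \<partial>lborel)"
      by (rule nn_integral_cmult) measurable
    also have "(\<integral>\<^sup>+x. ennreal (g (x + u)^2 * p (x + u)) \<partial>lborel) = (\<integral>\<^sup>+y. ennreal (g y ^ 2 * p y) \<partial>lborel)"
      using nn_integral_real_affine[of "\<lambda>y. ennreal (g y ^ 2 * p y)" 1 u] by (simp add: add.commute)
    also have "ennreal (S u * indicator {-s..s} u) * \<dots> \<le> ennreal (S u * indicator {-s..s} u) * 1"
      by (intro mult_left_mono gint) simp
    finally show ?thesis by simp
  qed
  have "(\<integral>\<^sup>+x. ennreal (indicator Aset x * p x) * (\<integral>\<^sup>+y. ennreal (g y * t x y) \<partial>lborel)\<^sup>2 \<partial>lborel)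
      \<le> (\<integral>\<^sup>+x. \<beta> * (\<integral>\<^sup>+u. ennreal (V x u) \<partial>lborel) \<partial>lborel)"
    by (intro nn_integral_mono pw)
  also have "\<dots> = \<beta> * (\<integral>\<^sup>+x. (\<integral>\<^sup>+u. ennreal (V x u) \<partial>lborel) \<partial>lborel)"
    by (rule nn_integral_cmult) measurable
  also have "(\<integral>\<^sup>+x. (\<integral>\<^sup>+u. ennreal (V x u) \<partial>lborel) \<partial>lborel) = (\<integral>\<^sup>+u. (\<integral>\<^sup>+x. ennreal (V x u) \<partial>lborel) \<partial>lborel)"
    by (rule lborel_pair.Fubini'[symmetric]) measurable
  also have "\<dots> \<le> \<beta>"
    unfolding \<beta>_def by (intro nn_integral_mono inner)
  also have "\<beta> * \<beta> = \<beta>\<^sup>2" by (simp add: power2_eq_square)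
  finally show ?thesis
    by (simp add: \<beta>_def mult_left_mono)
qed

lemma beta_eq: "(\<integral>\<^sup>+u. ennreal (S u * indicator {-s..s} u) \<partial>lborel) = ennreal (LBINT u=-s..s. S u)"
  and beta_nonneg: "0 \<le> (LBINT u=-s..s. S u)"
proof -
  have int: "integrable lborel (\<lambda>u. S u * indicator {-s..s} u)"
  proof -
    have i1: "integrable lborel (\<lambda>u. Bq * indicator {-s..s} u :: real)"
      using s_pos by (intro integrable_mult_right integrable_real_indicator) (auto simp: emeasure_lborel_Icc)
    have m1: "(\<lambda>u. S u * indicator {-s..s} u) \<in> borel_measurable lborel" by measurable
    have "AE x in lborel. norm (S x * indicator {-s..s} x) \<le> norm (Bq * indicator {- s..s} x :: real)"
      using S_nonneg S_le Bq_nonneg by (auto simp: indicator_def)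
    then show ?thesis using Bochner_Integration.integrable_bound[OF i1 m1] by blast
  qed
  have eq: "(LBINT u=-s..s. S u) = (LINT u|lborel. S u * indicator {-s..s} u)"
    using s_pos by (simp add: interval_integral_Icc set_lebesgue_integral_def ac_simps)
  show "(\<integral>\<^sup>+u. ennreal (S u * indicator {-s..s} u) \<partial>lborel) = ennreal (LBINT u=-s..s. S u)"
    unfolding eq using S_nonneg by (intro nn_integral_eq_integral int) auto
  show "0 \<le> (LBINT u=-s..s. S u)"
    unfolding eq using S_nonneg by (intro integral_nonneg_AE) auto
qed

end

lemma loc_meas_decomp:
  fixes f :: "real \<Rightarrow> real"
  defines "D \<equiv> {y. \<forall>e>0. (\<lambda>z. f z * indicator (ball y e) z) \<notin> borel_measurable borel}"
  shows "closed D" and "(\<lambda>z. f z * indicator (-D) z) \<in> borel_measurable borel"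
proof -
  define Fam where "Fam = {ball y e | y e. e > 0 \<and> (\<lambda>z. f z * indicator (ball y e) z) \<in> borel_measurable borel}"
  have UF: "\<Union>Fam = -D"
  proof
    show "\<Union>Fam \<subseteq> -D"
    proof
      fix z assume "z \<in> \<Union>Fam"
      then obtain y e where e: "e > 0" and m: "(\<lambda>z. f z * indicator (ball y e) z) \<in> borel_measurable borel"
        and z: "z \<in> ball y e" unfolding Fam_def by blast
      define e' where "e' = e - dist y z"
      have e': "e' > 0" using z by (simp add: e'_def)
      have sub: "ball z e' \<subseteq> ball y e"
      proof
        fix w assume "w \<in> ball z e'"
        then have "dist z w < e - dist y z" by (simp add: e'_def)
        then show "w \<in> ball y e" using dist_triangle[of y w z] by simp
      qed
      have eqf: "(\<lambda>w. f w * indicator (ball z e') w) = (\<lambda>w. (f w * indicator (ball y e) w) * indicator (ball z e') w)"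
        using sub by (auto simp: indicator_def fun_eq_iff)
      have [measurable]: "ball z e' \<in> sets borel" by simp
      have "(\<lambda>w. (f w * indicator (ball y e) w) * indicator (ball z e') w) \<in> borel_measurable borel"
        using m by measurable
      then have "(\<lambda>w. f w * indicator (ball z e') w) \<in> borel_measurable borel" using eqf by simp
      then show "z \<in> -D" unfolding D_def using e' by blast
    qed
    show "-D \<subseteq> \<Union>Fam"
    proof
      fix z assume "z \<in> -D"
      then obtain e where "e > 0" "(\<lambda>w. f w * indicator (ball z e) w) \<in> borel_measurable borel"
        unfolding D_def by blast
      then have "ball z e \<in> Fam" unfolding Fam_def by blast
      then show "z \<in> \<Union>Fam" using \<open>e > 0\<close> by (metis UnionI centre_in_ball)
    qed
  qed
  have "open (-D)" unfolding UF[symmetric] Fam_def by auto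
  then show cD: "closed D" by (simp add: closed_def)
  obtain Fam' where F1: "Fam' \<subseteq> Fam" and F2: "countable Fam'" and F3: "\<Union>Fam' = \<Union>Fam"
    using Lindelof[of Fam] unfolding Fam_def by blast
  have mU: "(\<lambda>z. f z * indicator U z) \<in> borel_measurable borel" if "U \<in> Fam'" for U
    using that F1 unfolding Fam_def by blast
  have oU: "open U" if "U \<in> Fam'" for U
    using that F1 unfolding Fam_def by blast
  show "(\<lambda>z. f z * indicator (-D) z) \<in> borel_measurable borel"
    unfolding borel_measurable_iff_greater
  proof
    fix c
    have eq: "{w \<in> space borel. c < f w * indicator (-D) w} =
      (\<Union>U\<in>Fam'. {w \<in> space borel. c < f w * indicator U w} \<inter> U) \<union> (if c < 0 then D else {})"
    proof (intro set_eqI iffI)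
      fix w assume w: "w \<in> {w \<in> space borel. c < f w * indicator (-D) w}"
      show "w \<in> (\<Union>U\<in>Fam'. {w \<in> space borel. c < f w * indicator U w} \<inter> U) \<union> (if c < 0 then D else {})"
      proof (cases "w \<in> D")
        case True then show ?thesis using w by auto
      next
        case False
        then obtain U where "U \<in> Fam'" "w \<in> U" using F3 UF by blast
        then show ?thesis using w False by (auto intro!: bexI[of _ U])
      qed
    next
      fix w assume w: "w \<in> (\<Union>U\<in>Fam'. {w \<in> space borel. c < f w * indicator U w} \<inter> U) \<union> (if c < 0 then D else {})"
      show "w \<in> {w \<in> space borel. c < f w * indicator (-D) w}"
      proof (cases "w \<in> D")
        case True
        then have "\<not> (\<exists>U\<in>Fam'. w \<in> U)" using F3 UF by blast
        then show ?thesis using w True by (auto split: if_splits)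
      next
        case False
        then show ?thesis using w by (auto split: if_splits)
      qed
    qed
    have "(\<Union>U\<in>Fam'. {w \<in> space borel. c < f w * indicator U w} \<inter> U) \<in> sets borel"
    proof (rule sets.countable_UN''[OF F2])
      fix U assume U: "U \<in> Fam'"
      have "{w \<in> space borel. c < f w * indicator U w} \<in> sets borel"
        using mU[OF U] unfolding borel_measurable_iff_greater by blast
      moreover have "U \<in> sets borel" using oU[OF U] by simp
      ultimately show "{w \<in> space borel. c < f w * indicator U w} \<inter> U \<in> sets borel" by blast
    qed
    moreover have "(if c < 0 then D else {}) \<in> sets borel" using cD by simp
    ultimately show "{w \<in> space borel. c < f w * indicator (-D) w} \<in> sets borel"
      unfolding eq by blast
  qed
qed


context setting
begin

lemma op_bound:
  assumes fL: "L2norm p f \<le> 1"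
  shows "L2norm p (Tac p q a f) \<le> ereal (LBINT u=-s..s. S u)"
proof -
  have fint: "integrable lborel (\<lambda>y. (f y)\<^sup>2 * p y)" and fle: "sqrt (LINT y|lborel. (f y)\<^sup>2 * p y) \<le> 1"
    using fL unfolding L2norm_def by (auto split: if_splits)
  have fle1: "(LINT y|lborel. (f y)\<^sup>2 * p y) \<le> 1" using fle by simp
  define D where "D = {y. \<forall>e>0. (\<lambda>z. f z * indicator (ball y e) z) \<notin> borel_measurable borel}"
  have cD: "closed D" and ftm[measurable]: "(\<lambda>z. f z * indicator (-D) z) \<in> borel_measurable borel"
    using loc_meas_decomp[of f] unfolding D_def by auto
  define ft where "ft z = f z * indicator (-D) z" for z
  have [measurable]: "ft \<in> borel_measurable borel" unfolding ft_def by (rule ftm)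
  define G where "G = {x. \<forall>y\<in>D. t x y = 0}"
  have cG: "closed G"
  proof -
    have "G = (\<Inter>y\<in>D. {x. t x y = 0})" unfolding G_def by auto
    moreover have "closed {x. t x y = 0}" for y
      by (intro closed_Collect_eq continuous_on_const t_cont_comp continuous_on_id)
    ultimately show ?thesis by auto
  qed
  then have [measurable]: "G \<in> sets borel" by simp
  have TopEq: "Top p q f x = indicator G x * Top p q ft x" for x
  proof (cases "x \<in> G")
    case True
    have "f y * t x y = ft y * t x y" for y
      using True unfolding G_def ft_def by (cases "y \<in> D") auto
    then have "(\<lambda>y. f y * t x y) = (\<lambda>y. ft y * t x y)" by (rule ext)
    then show ?thesis using True unfolding Top_def by simp
  next
    case False
    then obtain y0 where y0: "y0 \<in> D" "t x y0 \<noteq> 0" unfolding G_def by blast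
    then have tp: "t x y0 > 0" using t_nonneg[of x y0] by simp
    have "open {y. 0 < t x y}"
      by (intro open_Collect_less continuous_on_const t_cont_comp continuous_on_id)
    then obtain e where e: "e > 0" "ball y0 e \<subseteq> {y. 0 < t x y}"
      using tp unfolding open_contains_ball by blast
    have "\<not> integrable lborel (\<lambda>y. f y * t x y)"
    proof
      assume "integrable lborel (\<lambda>y. f y * t x y)"
      then have m: "(\<lambda>y. f y * t x y) \<in> borel_measurable borel"
        using borel_measurable_integrable by fastforce
      have tm: "(\<lambda>z. t x z) \<in> borel_measurable borel" by measurable
      have "(\<lambda>z. (f z * t x z) / t x z * indicator (ball y0 e) z) \<in> borel_measurable borel"
        by (intro borel_measurable_times borel_measurable_divide m tm borel_measurable_indicator) simp
      moreover have "(\<lambda>z. (f z * t x z) / t x z * indicator (ball y0 e) z) = (\<lambda>z. f z * indicator (ball y0 e) z)"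
        using e by (auto simp: fun_eq_iff indicator_def)
      ultimately have "(\<lambda>z. f z * indicator (ball y0 e) z) \<in> borel_measurable borel" by simp
      then show False using y0(1) e(1) unfolding D_def by blast
    qed
    then show ?thesis using False by (simp add: Top_def not_integrable_integral_eq)
  qed
  have Topm[measurable]: "Top p q ft \<in> borel_measurable borel"
    unfolding Top_def by measurable
  have indA: "indicator (UNIV - {-a..a}) x = (indicator Aset x :: real)" for x
    by (auto simp: indicator_def abs_le_iff)
  have TacEq: "Tac p q a f = (\<lambda>x. indicator Aset x * (indicator G x * Top p q ft x))"
    by (simp add: fun_eq_iff Tac_def TopEq indA)
  have Tacm[measurable]: "Tac p q a f \<in> borel_measurable borel"
    unfolding TacEq by measurable
  define g where "g y = \<bar>ft y\<bar>" for y
  have [measurable]: "g \<in> borel_measurable borel" unfolding g_def by measurable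
  have g0: "0 \<le> g y" for y unfolding g_def by simp
  have gint: "(\<integral>\<^sup>+y. ennreal (g y ^ 2 * p y) \<partial>lborel) \<le> 1"
  proof -
    have "(\<integral>\<^sup>+y. ennreal (g y ^ 2 * p y) \<partial>lborel) \<le> (\<integral>\<^sup>+y. ennreal ((f y)\<^sup>2 * p y) \<partial>lborel)"
    proof (intro nn_integral_mono ennreal_leI)
      fix y show "g y ^ 2 * p y \<le> (f y)\<^sup>2 * p y"
        using p_pos[of y] by (intro mult_right_mono) (auto simp: g_def ft_def indicator_def)
    qed
    also have "\<dots> = ennreal (LINT y|lborel. (f y)\<^sup>2 * p y)"
      using p_pos by (intro nn_integral_eq_integral fint AE_I2) (metis less_imp_le mult_nonneg_nonneg zero_le_power2)
    also have "\<dots> \<le> 1" using fle1 by simp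
    finally show ?thesis .
  qed
  define K where "K x = (\<integral>\<^sup>+y. ennreal (g y * t x y) \<partial>lborel)" for x
  have TopK: "ennreal \<bar>Top p q ft x\<bar> \<le> K x" for x
  proof (cases "integrable lborel (\<lambda>y. ft y * t x y)")
    case True
    have "norm (LINT y|lborel. ft y * t x y) \<le> (\<integral>\<^sup>+y. norm (ft y * t x y) \<partial>lborel)"
      by (rule integral_norm_bound_ennreal[OF True])
    also have "\<dots> = K x" unfolding K_def g_def using t_nonneg
      by (intro nn_integral_cong) (simp add: abs_mult)
    finally show ?thesis by (simp add: Top_def)
  next
    case False
    then show ?thesis by (simp add: Top_def not_integrable_integral_eq)
  qed
  have pw: "ennreal ((Tac p q a f x)\<^sup>2 * p x) \<le> ennreal (indicator Aset x * p x) * (K x)\<^sup>2" for x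
  proof (cases "x \<in> Aset")
    case False
    then show ?thesis by (simp add: TacEq)
  next
    case True
    have le: "\<bar>Tac p q a f x\<bar> \<le> \<bar>Top p q ft x\<bar>"
      using True by (simp add: TacEq indicator_def abs_mult)
    have "ennreal ((Tac p q a f x)\<^sup>2 * p x) = ennreal \<bar>Tac p q a f x\<bar> * ennreal \<bar>Tac p q a f x\<bar> * ennreal (p x)"
      using p_pos[of x] by (simp add: ennreal_mult[symmetric] power2_eq_square abs_mult_self_eq)
    also have "\<dots> \<le> K x * K x * ennreal (p x)"
      using order_trans[OF ennreal_leI[OF le] TopK[of x]]
      by (intro mult_right_mono mult_mono) auto
    also have "\<dots> = ennreal (indicator Aset x * p x) * (K x)\<^sup>2"
      using True by (simp add: power2_eq_square ac_simps)
    finally show ?thesis .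
  qed
  define \<beta> where "\<beta> = (LBINT u=-s..s. S u)"
  have b0: "0 \<le> \<beta>" unfolding \<beta>_def by (rule beta_nonneg)
  have nnb: "(\<integral>\<^sup>+x. ennreal ((Tac p q a f x)\<^sup>2 * p x) \<partial>lborel) \<le> ennreal (\<beta>\<^sup>2)"
  proof -
    have "(\<integral>\<^sup>+x. ennreal ((Tac p q a f x)\<^sup>2 * p x) \<partial>lborel)
        \<le> (\<integral>\<^sup>+x. ennreal (indicator Aset x * p x) * (K x)\<^sup>2 \<partial>lborel)"
      by (intro nn_integral_mono pw)
    also have "\<dots> \<le> (\<integral>\<^sup>+u. ennreal (S u * indicator {-s..s} u) \<partial>lborel)\<^sup>2"
      unfolding K_def by (rule main_ineq) (auto simp: g0 gint)
    also have "\<dots> = ennreal (\<beta>\<^sup>2)"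
      unfolding beta_eq \<beta>_def using beta_nonneg by (simp add: ennreal_power)
    finally show ?thesis .
  qed
  have intT: "integrable lborel (\<lambda>x. (Tac p q a f x)\<^sup>2 * p x)"
  proof (rule integrableI_bounded)
    show "(\<lambda>x. (Tac p q a f x)\<^sup>2 * p x) \<in> borel_measurable lborel" by measurable
    have "(\<integral>\<^sup>+x. ennreal (norm ((Tac p q a f x)\<^sup>2 * p x)) \<partial>lborel) = (\<integral>\<^sup>+x. ennreal ((Tac p q a f x)\<^sup>2 * p x) \<partial>lborel)"
      using p_pos by (intro nn_integral_cong) (simp add: abs_mult less_imp_le)
    also have "\<dots> < \<infinity>" using nnb by (simp add: le_less_trans)
    finally show "(\<integral>\<^sup>+x. ennreal (norm ((Tac p q a f x)\<^sup>2 * p x)) \<partial>lborel) < \<infinity>" .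
  qed
  have "(LINT x|lborel. (Tac p q a f x)\<^sup>2 * p x) = enn2real (\<integral>\<^sup>+x. ennreal ((Tac p q a f x)\<^sup>2 * p x) \<partial>lborel)"
  proof (rule integral_eq_nn_integral)
    show "(\<lambda>x. (Tac p q a f x)\<^sup>2 * p x) \<in> borel_measurable lborel" by measurable
    show "AE x in lborel. 0 \<le> (Tac p q a f x)\<^sup>2 * p x"
      using p_pos by (intro AE_I2) (metis less_imp_le mult_nonneg_nonneg zero_le_power2)
  qed
  also have "\<dots> \<le> enn2real (ennreal (\<beta>\<^sup>2))"
    by (intro enn2real_mono nnb) simp
  also have "\<dots> = \<beta>\<^sup>2" by simp
  finally have "sqrt (LINT x|lborel. (Tac p q a f x)\<^sup>2 * p x) \<le> sqrt (\<beta>\<^sup>2)"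
    by (rule real_sqrt_le_mono)
  then have "sqrt (LINT x|lborel. (Tac p q a f x)\<^sup>2 * p x) \<le> \<beta>" using b0 by simp
  then show ?thesis unfolding L2norm_def \<beta>_def using intT by simp
qed

lemma opnorm_bound: "opnorm2 p (Tac p q a) \<le> ereal (LBINT u=-s..s. S u)"
  unfolding opnorm2_def by (rule SUP_least) (use op_bound in auto)

end

theorem proposition3p3:
  fixes p :: "real \<Rightarrow> real" and q :: "real \<Rightarrow> real \<Rightarrow> real" and s a :: real
  assumes p_pos: "\<And>x. p x > 0"
    and p_cont: "continuous_on UNIV p"
    and p_int: "integrable lborel p"
    and p_prob: "(LINT x|lborel. p x) = 1"
    and q_nonneg: "\<And>x y. q x y \<ge> 0"
    and q_bdd: "\<exists>B. \<forall>x y. q x y \<le> B"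
    and q_cont: "continuous_on UNIV (\<lambda>(x, y). q x y)"
    and q_int: "\<And>x. integrable lborel (q x)"
    and q_prob: "\<And>x. (LINT y|lborel. q x y) = 1"
    and s_pos: "s > 0"
    and q_supp: "\<And>x u. \<bar>u\<bar> > s \<Longrightarrow> q x (x + u) = 0"
    and a_pos: "a > 0"
  shows "opnorm2 p (Tac p q a) \<le>
    ereal (LBINT u=-s..s. (SUP x\<in>{x. \<bar>x\<bar> > a}.
              sqrt (tker p q x (x + u) * tker p q (x + u) x)))"
proof -
  interpret setting p q s a
    by unfold_locales (use assms in auto)
  show ?thesis by (rule opnorm_bound)
qed

end
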